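(* For all integers $n \ge 1$ and $0 \le m \le n-1$ we have $\widehat{C}_{n,m} \le \widehat{K}_{\star,m+1}(G_{n-1}^\infty) \le (n-1)!\,(m+1)^{n-1}$.
   Context: $\mathcal{K}_k^n = \{\prod_{s=1}^n [\frac{i_s-1}{k}, \frac{i_s}{k}] : i_s \in \{1,\dots,k\}\}$ (cubes dividing $I^n=[0,1]^n$); $\dim$ is topological dimension; a set $S\subset I^n$ connects some opposite faces of $I^n$ if it is connected and meets both $\{z_i=0\}$ and $\{z_i=1\}$ for some $i$; $\mathbb{Z}^{n-1}$ has the $\ell^\infty$ norm, $\mathbb{Z}^0=\{0\}$; a set $P\subset\mathbb{Z}^{n-1}$ is $1$-connected if any two points are joined by a finite chain in $P$ with consecutive $\ell^\infty$-distances $\le 1$. $\widehat{C}_{n,m}$ is the least constant $C>0$ such that: for every $k\in\mathbb{N}$ and every $F\colon\mathcal{K}_k^n\to\mathbb{Z}^{n-1}$ with $\|F(K_1)-F(K_2)\|_\infty\le 1$ whenever $\dim(K_1\cap K_2)\ge m$, there exist a $1$-connected $P\subset\mathbb{Z}^{n-1}$ with $|P|\le C$ and $\mathcal{S}\subset F^{-1}[P]$ with $\bigcup\mathcal{S}$ connecting some opposite faces of $I^n$. For a graph $G$ with graph distance and $m\in\mathbb{N}$: an $m$-distance clustered $N$-coloring is $f\colon V\to\{1,\dots,N\}$ such that for some $K_\star>0$, every connected component of the subgraph induced by each color class has at most $K_\star$ vertices and distinct components of the same color are at distance $>m$; $\chi_{\star,m}(G)$ is the least such $N$; $\widehat{K}_{\star,m}(G)$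 is the least $K_\star$ over $m$-distance clustered $\chi_{\star,m}(G)$-colorings. $G_{d}^\infty$ is the graph on $\mathbb{Z}^{d}$ with $x\sim y$ iff $\|x-y\|_\infty=1$ ($G_0^\infty$ is a single vertex). *)

theory Defs
  imports "HOL-Analysis.Analysis"
begin

text \<open>Z^d is represented by integer sequences vanishing from index d on;
  Z^0 is the single zero sequence.\<close>

definition Zsp :: "nat \<Rightarrow> (nat \<Rightarrow> int) set" where
  "Zsp d = {p. \<forall>i\<ge>d. p i = 0}"

definition linf :: "nat \<Rightarrow> (nat \<Rightarrow> int) \<Rightarrow> (nat \<Rightarrow> int) \<Rightarrow> int" where
  "linf d p q = Max (insert 0 {\<bar>p i - q i\<bar> | i. i < d})"

definition one_connected :: "nat \<Rightarrow> (nat \<Rightarrow> int) set \<Rightarrow> bool" where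
  "one_connected d P \<longleftrightarrow>
     (\<forall>p\<in>P. \<forall>q\<in>P. \<exists>xs. xs \<noteq> [] \<and> hd xs = p \<and> last xs = q \<and> set xs \<subseteq> P \<and>
        (\<forall>i. Suc i < length xs \<longrightarrow> linf d (xs ! i) (xs ! Suc i) \<le> 1))"

definition cubes :: "nat \<Rightarrow> (real^'n) set set" where
  "cubes k = {cbox (\<chi> s. (real (i s) - 1) / real k) (\<chi> s. real (i s) / real k) | i :: 'n \<Rightarrow> nat.
                 \<forall>s. 1 \<le> i s \<and> i s \<le> k}"

definition connects_faces :: "(real^'n) set \<Rightarrow> bool" where
  "connects_faces S \<longleftrightarrow> connected S \<and>
     (\<exists>i. (\<exists>z\<in>S. z $ i = 0) \<and> (\<exists>z\<in>S. z $ i = 1))"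

text \<open>Admissible constants C for C-hat_{n,m}, n = CARD('n).  The topological
  dimension of the intersection of two cubes (a convex set, possibly empty) is its
  affine dimension aff_dim (with aff_dim {} = -1).\<close>

definition Chat_ok :: "'n::finite itself \<Rightarrow> nat \<Rightarrow> real \<Rightarrow> bool" where
  "Chat_ok _ m C \<longleftrightarrow> C > 0 \<and>
     (\<forall>k::nat. k \<ge> 1 \<longrightarrow> (\<forall>F :: (real^'n) set \<Rightarrow> (nat \<Rightarrow> int).
        ((\<forall>K\<in>cubes k. F K \<in> Zsp (CARD('n) - 1)) \<and>
         (\<forall>K1\<in>cubes k. \<forall>K2\<in>cubes k. aff_dim (K1 \<inter> K2) \<ge> int m \<longrightarrow>
             linf (CARD('n) - 1) (F K1) (F K2) \<le> 1))
        \<longrightarrow> (\<exists>P. P \<subseteq> Zsp (CARD('n) - 1) \<and> one_connected (CARD('n) - 1) P \<and>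
               finite P \<and> real (card P) \<le> C \<and>
               (\<exists>S. S \<subseteq> cubes k \<and> (\<forall>K\<in>S. F K \<in> P) \<and> connects_faces (\<Union>S)))))"

definition Chat :: "'n::finite itself \<Rightarrow> nat \<Rightarrow> real" where
  "Chat T m = Inf {C. Chat_ok T m C}"

definition walk_len :: "'a set \<Rightarrow> ('a \<Rightarrow> 'a \<Rightarrow> bool) \<Rightarrow> nat \<Rightarrow> 'a \<Rightarrow> 'a \<Rightarrow> bool" where
  "walk_len V E r x y \<longleftrightarrow> (\<exists>w :: nat \<Rightarrow> 'a. w 0 = x \<and> w r = y \<and> (\<forall>i\<le>r. w i \<in> V) \<and>
      (\<forall>i<r. E (w i) (w (Suc i))))"

definition gdist_le :: "'a set \<Rightarrow> ('a \<Rightarrow> 'a \<Rightarrow> bool) \<Rightarrow> nat \<Rightarrow> 'a \<Rightarrow> 'a \<Rightarrow> bool" where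
  "gdist_le V E r x y \<longleftrightarrow> (\<exists>l\<le>r. walk_len V E l x y)"

definition colour_comp :: "'a set \<Rightarrow> ('a \<Rightarrow> 'a \<Rightarrow> bool) \<Rightarrow> ('a \<Rightarrow> nat) \<Rightarrow> 'a \<Rightarrow> 'a set" where
  "colour_comp V E f x = {y. \<exists>l. walk_len {v\<in>V. f v = f x} E l x y}"

definition clustered_col :: "'a set \<Rightarrow> ('a \<Rightarrow> 'a \<Rightarrow> bool) \<Rightarrow> nat \<Rightarrow> nat \<Rightarrow> real \<Rightarrow> ('a \<Rightarrow> nat) \<Rightarrow> bool" where
  "clustered_col V E m N K f \<longleftrightarrow> K > 0 \<and>
     (\<forall>x\<in>V. f x \<in> {1..N}) \<and>
     (\<forall>x\<in>V. finite (colour_comp V E f x) \<and> real (card (colour_comp V E f x)) \<le> K) \<and>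
     (\<forall>x\<in>V. \<forall>y\<in>V. f x = f y \<and> colour_comp V E f x \<noteq> colour_comp V E f y \<longrightarrow>
        \<not> gdist_le V E m x y)"

definition chi_star :: "'a set \<Rightarrow> ('a \<Rightarrow> 'a \<Rightarrow> bool) \<Rightarrow> nat \<Rightarrow> nat" where
  "chi_star V E m = (LEAST N. \<exists>K f. clustered_col V E m N K f)"

definition Khat_ok :: "'a set \<Rightarrow> ('a \<Rightarrow> 'a \<Rightarrow> bool) \<Rightarrow> nat \<Rightarrow> real \<Rightarrow> bool" where
  "Khat_ok V E m K \<longleftrightarrow> (\<exists>f. clustered_col V E m (chi_star V E m) K f)"

definition Khat :: "'a set \<Rightarrow> ('a \<Rightarrow> 'a \<Rightarrow> bool) \<Rightarrow> nat \<Rightarrow> real" where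
  "Khat V E m = Inf {K. Khat_ok V E m K}"

definition Ginf_adj :: "nat \<Rightarrow> (nat \<Rightarrow> int) \<Rightarrow> (nat \<Rightarrow> int) \<Rightarrow> bool" where
  "Ginf_adj d p q \<longleftrightarrow> linf d p q = 1"

end

theory Submission
  imports Defs
begin


lemma linf_set_eq: "{\<bar>p i - q i\<bar> | i. i < d} = (\<lambda>i. \<bar>p i - q i\<bar>) ` {..<d}"
  by auto

lemma linf_alt: "linf d p q = Max (insert 0 ((\<lambda>i. \<bar>p i - q i\<bar>) ` {..<d}))"
  unfolding linf_def linf_set_eq ..

lemma linf_le_iff: "linf d p q \<le> c \<longleftrightarrow> 0 \<le> c \<and> (\<forall>i<d. \<bar>p i - q i\<bar> \<le> c)"
  unfolding linf_alt by (subst Max_le_iff) auto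

lemma linf_ge: "i < d \<Longrightarrow> \<bar>p i - q i\<bar> \<le> linf d p q"
  unfolding linf_alt by (rule Max_ge) auto

lemma linf_nonneg: "0 \<le> linf d p q"
  unfolding linf_alt by (rule Max_ge) auto

lemma linf_attained:
  assumes "linf d p q > 0" shows "\<exists>i<d. \<bar>p i - q i\<bar> = linf d p q"
proof -
  have "linf d p q \<in> insert 0 ((\<lambda>i. \<bar>p i - q i\<bar>) ` {..<d})"
    unfolding linf_alt by (rule Max_in) auto
  with assms show ?thesis by auto
qed

lemma linf_sym: "linf d p q = linf d q p"
  unfolding linf_alt by (simp add: abs_minus_commute)

lemma linf_self: "linf d p p = 0"
  using linf_le_iff[of d p p 0] linf_nonneg[of d p p] by auto

lemma linf_triangle: "linf d p r \<le> linf d p q + linf d q r"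
proof -
  have "\<bar>p i - r i\<bar> \<le> linf d p q + linf d q r" if "i < d" for i
    using linf_ge[OF that, of p q] linf_ge[OF that, of q r] by linarith
  then show ?thesis using linf_le_iff linf_nonneg[of d p q] linf_nonneg[of d q r]
    by (metis add_nonneg_nonneg)
qed

lemma linf_zero_eq:
  assumes "linf d p q = 0" "p \<in> Zsp d" "q \<in> Zsp d" shows "p = q"
proof
  fix i show "p i = q i"
  proof (cases "i < d")
    case True then show ?thesis using linf_ge[OF True, of p q] assms(1) by auto
  next
    case False then show ?thesis using assms(2,3) by (auto simp: Zsp_def)
  qed
qed

section \<open>walks\<close>

lemma walk_len_refl: "x \<in> V \<Longrightarrow> walk_len V E 0 x x"
  unfolding walk_len_def by (rule exI[of _ "\<lambda>_. x"]) auto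

lemma walk_len_step: "x \<in> V \<Longrightarrow> y \<in> V \<Longrightarrow> E x y \<Longrightarrow> walk_len V E 1 x y"
  unfolding walk_len_def by (rule exI[of _ "\<lambda>i. if i = 0 then x else y"]) auto

lemma walk_len_ends: "walk_len V E r x y \<Longrightarrow> x \<in> V \<and> y \<in> V"
  unfolding walk_len_def by (metis le0 order_refl)

lemma walk_len_append:
  assumes "walk_len V E r1 x y" "walk_len V E r2 y z"
  shows "walk_len V E (r1 + r2) x z"
proof -
  obtain w1 where w1: "w1 0 = x" "w1 r1 = y" "\<forall>i\<le>r1. w1 i \<in> V" "\<forall>i<r1. E (w1 i) (w1 (Suc i))"
    using assms(1) unfolding walk_len_def by blast
  obtain w2 where w2: "w2 0 = y" "w2 r2 = z" "\<forall>i\<le>r2. w2 i \<in> V" "\<forall>i<r2. E (w2 i) (w2 (Suc i))"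
    using assms(2) unfolding walk_len_def by blast
  define w where "w i = (if i \<le> r1 then w1 i else w2 (i - r1))" for i
  have "w 0 = x" using w1 by (simp add: w_def)
  moreover have "w (r1 + r2) = z" using w1 w2 by (auto simp: w_def)
  moreover have "\<forall>i\<le>r1+r2. w i \<in> V" using w1 w2 by (auto simp: w_def)
  moreover have "\<forall>i<r1+r2. E (w i) (w (Suc i))"
  proof (intro allI impI)
    fix i assume i: "i < r1 + r2"
    show "E (w i) (w (Suc i))"
    proof (cases "i < r1")
      case True then show ?thesis using w1 by (auto simp: w_def)
    next
      case False
      then have "Suc i - r1 = Suc (i - r1)" by auto
      then show ?thesis using w1 w2 False i
        by (cases "i = r1") (auto simp: w_def)
    qed
  qed
  ultimately show ?thesis unfolding walk_len_def by blast
qed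

lemma walk_len_rev:
  assumes "walk_len V E r x y" "\<And>a b. E a b \<Longrightarrow> E b a"
  shows "walk_len V E r y x"
proof -
  obtain w where w: "w 0 = x" "w r = y" "\<forall>i\<le>r. w i \<in> V" "\<forall>i<r. E (w i) (w (Suc i))"
    using assms(1) unfolding walk_len_def by blast
  define v where "v i = w (r - i)" for i
  have "\<forall>i<r. E (v i) (v (Suc i))"
  proof (intro allI impI)
    fix i assume "i < r"
    then have "E (w (r - Suc i)) (w (Suc (r - Suc i)))" using w(4) by auto
    moreover have "Suc (r - Suc i) = r - i" using \<open>i < r\<close> by auto
    ultimately show "E (v i) (v (Suc i))" using assms(2) by (auto simp: v_def)
  qed
  moreover have "v 0 = y" "v r = x" using w by (auto simp: v_def)
  moreover have "\<forall>i\<le>r. v i \<in> V" using w by (auto simp: v_def)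
  ultimately show ?thesis unfolding walk_len_def by blast
qed

lemma walk_len_prefix:
  assumes "walk_len V E r x y" 
  obtains w where "w 0 = x" "w r = y" "\<forall>i\<le>r. w i \<in> V" "\<forall>i<r. E (w i) (w (Suc i))"
     "\<forall>j\<le>r. walk_len V E j x (w j)"
proof -
  obtain w where w: "w 0 = x" "w r = y" "\<forall>i\<le>r. w i \<in> V" "\<forall>i<r. E (w i) (w (Suc i))"
    using assms(1) unfolding walk_len_def by blast
  have "walk_len V E j x (w j)" if "j \<le> r" for j
    unfolding walk_len_def using w that by (intro exI[of _ w]) auto
  then show ?thesis using that w by blast
qed

lemma walk_len_mono_V:
  "walk_len V E r x y \<Longrightarrow> V \<subseteq> V' \<Longrightarrow> walk_len V' E r x y"
  unfolding walk_len_def by blast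

section \<open>colour components\<close>

lemma cc_self: "x \<in> V \<Longrightarrow> x \<in> colour_comp V E f x"
  unfolding colour_comp_def by (auto intro: walk_len_refl)

lemma cc_mem: assumes "y \<in> colour_comp V E f x" shows "y \<in> V \<and> f y = f x \<and> x \<in> V"
proof -
  obtain l where "walk_len {v\<in>V. f v = f x} E l x y" using assms unfolding colour_comp_def by blast
  from walk_len_ends[OF this] show ?thesis by simp
qed

lemma cc_trans:
  assumes "y \<in> colour_comp V E f x" "z \<in> colour_comp V E f y"
  shows "z \<in> colour_comp V E f x"
proof -
  have "f y = f x" using cc_mem[OF assms(1)] by auto
  obtain l1 where 1: "walk_len {v\<in>V. f v = f x} E l1 x y" using assms(1) unfolding colour_comp_def by blast
  obtain l2 where 2: "walk_len {v\<in>V. f v = f y} E l2 y z" using assms(2) unfolding colour_comp_def by blast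
  have "walk_len {v\<in>V. f v = f x} E (l1 + l2) x z"
    using walk_len_append[OF 1] 2 \<open>f y = f x\<close> by simp
  then show ?thesis unfolding colour_comp_def by blast
qed

lemma cc_sym:
  assumes "y \<in> colour_comp V E f x" "\<And>a b. E a b \<Longrightarrow> E b a"
  shows "x \<in> colour_comp V E f y"
proof -
  have "f y = f x" using cc_mem[OF assms(1)] by auto
  obtain l1 where 1: "walk_len {v\<in>V. f v = f x} E l1 x y" using assms(1) unfolding colour_comp_def by blast
  have "walk_len {v\<in>V. f v = f y} E l1 y x"
    using walk_len_rev[OF 1 assms(2)] \<open>f y = f x\<close> by simp
  then show ?thesis unfolding colour_comp_def by blast
qed

lemma cc_eq:
  assumes "y \<in> colour_comp V E f x" "\<And>a b. E a b \<Longrightarrow> E b a"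
  shows "colour_comp V E f y = colour_comp V E f x"
proof
  show "colour_comp V E f y \<subseteq> colour_comp V E f x"
    using cc_trans[OF assms(1)] by blast
  have "x \<in> colour_comp V E f y" by (rule cc_sym[OF assms])
  then show "colour_comp V E f x \<subseteq> colour_comp V E f y"
    using cc_trans[of x V E f y] by blast
qed

lemma Ginf_sym: "Ginf_adj d a b \<Longrightarrow> Ginf_adj d b a"
  unfolding Ginf_adj_def by (simp add: linf_sym)

lemma walk_linf:
  assumes "walk_len V (Ginf_adj d) l x y"
  shows "linf d x y \<le> int l"
proof -
  obtain w where w: "w 0 = x" "w l = y" "\<forall>i<l. Ginf_adj d (w i) (w (Suc i))"
    using assms unfolding walk_len_def by blast
  have "linf d x (w j) \<le> int j" if "j \<le> l" for j
    using that
  proof (induction j)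
    case 0 then show ?case using w(1) by (simp add: linf_self)
  next
    case (Suc j)
    then have "linf d x (w j) \<le> int j" "Ginf_adj d (w j) (w (Suc j))" using w(3) by auto
    moreover have "linf d x (w (Suc j)) \<le> linf d x (w j) + linf d (w j) (w (Suc j))"
      by (rule linf_triangle)
    ultimately show ?case unfolding Ginf_adj_def by linarith
  qed
  then show ?thesis using w(2) by auto
qed

lemma one_connected_cc:
  "one_connected d (colour_comp V (Ginf_adj d) f x)"
  unfolding one_connected_def
proof (intro ballI)
  fix p q assume p: "p \<in> colour_comp V (Ginf_adj d) f x" and q: "q \<in> colour_comp V (Ginf_adj d) f x"
  have "q \<in> colour_comp V (Ginf_adj d) f p"
    using cc_eq[OF p] q Ginf_sym by blast
  then obtain l where "walk_len {v\<in>V. f v = f p} (Ginf_adj d) l p q"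
    unfolding colour_comp_def by auto
  then obtain w where w: "w 0 = p" "w l = q" "\<forall>i\<le>l. w i \<in> {v\<in>V. f v = f p}"
     "\<forall>i<l. Ginf_adj d (w i) (w (Suc i))"
     "\<forall>j\<le>l. walk_len {v\<in>V. f v = f p} (Ginf_adj d) j p (w j)"
    by (rule walk_len_prefix)
  define xs where "xs = map w [0..<Suc l]"
  have len: "length xs = Suc l" by (simp add: xs_def del: upt_Suc)
  have nth: "xs ! i = w i" if "i \<le> l" for i
    using that by (simp add: xs_def del: upt_Suc)
  have "xs \<noteq> []" using len by auto
  moreover have "hd xs = p" using nth[of 0] w(1) \<open>xs \<noteq> []\<close> by (simp add: hd_conv_nth)
  moreover have "last xs = q" using nth[of l] w(2) \<open>xs \<noteq> []\<close> len by (simp add: last_conv_nth)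
  moreover have "set xs \<subseteq> colour_comp V (Ginf_adj d) f x"
  proof
    fix z assume "z \<in> set xs"
    then obtain j where j: "j < length xs" "z = xs ! j" by (auto simp: in_set_conv_nth)
    then have j: "j \<le> l" "z = w j" using len nth by auto
    then have "walk_len {v\<in>V. f v = f p} (Ginf_adj d) j p z" using w(5) by auto
    then have "z \<in> colour_comp V (Ginf_adj d) f p" unfolding colour_comp_def by blast
    then show "z \<in> colour_comp V (Ginf_adj d) f x" using cc_trans[OF p] by blast
  qed
  moreover have "\<forall>i. Suc i < length xs \<longrightarrow> linf d (xs ! i) (xs ! Suc i) \<le> 1"
  proof (intro allI impI)
    fix i assume "Suc i < length xs"
    then have "i < l" using len by auto
    then show "linf d (xs ! i) (xs ! Suc i) \<le> 1" using w(4) nth[of i] nth[of "Suc i"]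
      by (simp add: Ginf_adj_def)
  qed
  ultimately show "\<exists>xs. xs \<noteq> [] \<and> hd xs = p \<and> last xs = q \<and> set xs \<subseteq> colour_comp V (Ginf_adj d) f x \<and>
        (\<forall>i. Suc i < length xs \<longrightarrow> linf d (xs ! i) (xs ! Suc i) \<le> 1)" by blast
qed


section \<open>straight walks\<close>

lemma sg1: fixes \<delta> :: int shows "min 0 \<delta> \<le> sgn \<delta> * min (int j) \<bar>\<delta>\<bar> \<and> sgn \<delta> * min (int j) \<bar>\<delta>\<bar> \<le> max 0 \<delta>"
  by (cases "\<delta> > 0"; cases "\<delta> = 0") (auto simp: min_def)
lemma sg2: fixes \<delta> :: int shows "\<bar>sgn \<delta> * min (int (Suc j)) \<bar>\<delta>\<bar> - sgn \<delta> * min (int j) \<bar>\<delta>\<bar>\<bar> \<le> 1"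
  by (cases "\<delta> > 0"; cases "\<delta> = 0") (auto simp: min_def)
lemma sg3: fixes \<delta> :: int shows "int j < \<bar>\<delta>\<bar> \<Longrightarrow> \<bar>sgn \<delta> * min (int (Suc j)) \<bar>\<delta>\<bar> - sgn \<delta> * min (int j) \<bar>\<delta>\<bar>\<bar> = 1"
  by (cases "\<delta> > 0"; cases "\<delta> = 0") (auto simp: min_def)

lemma straight_walk:
  assumes p: "p \<in> Zsp d" and q: "q \<in> Zsp d"
  obtains w where "w 0 = p" "w (nat (linf d p q)) = q" "\<forall>j. w j \<in> Zsp d"
    "\<forall>j<nat (linf d p q). Ginf_adj d (w j) (w (Suc j))"
    "\<forall>j. \<forall>i<d. min (p i) (q i) \<le> w j i \<and> w j i \<le> max (p i) (q i)"
proof -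
  define L where "L = nat (linf d p q)"
  have L: "int L = linf d p q" using linf_nonneg[of d p q] by (simp add: L_def)
  define w where "w j = (\<lambda>i. if i < d then p i + sgn (q i - p i) * min (int j) \<bar>q i - p i\<bar> else 0)" for j
  have w0: "w 0 = p"
  proof
    fix i show "w 0 i = p i" using p by (auto simp: w_def Zsp_def)
  qed
  have wL: "w L = q"
  proof
    fix i show "w L i = q i"
    proof (cases "i < d")
      case True
      then have "\<bar>q i - p i\<bar> \<le> int L" using linf_ge[OF True, of q p] L linf_sym[of d p q] by simp
      then have "min (int L) \<bar>q i - p i\<bar> = \<bar>q i - p i\<bar>" by simp
      then show ?thesis using True by (simp add: w_def sgn_mult_abs)
    next
      case False then show ?thesis using q by (auto simp: w_def Zsp_def)
    qed
  qed
  have wZ: "\<forall>j. w j \<in> Zsp d" by (auto simp: w_def Zsp_def)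
  have btw: "\<forall>j. \<forall>i<d. min (p i) (q i) \<le> w j i \<and> w j i \<le> max (p i) (q i)"
  proof (intro allI impI)
    fix j i assume "i < d"
    have "w j i = p i + sgn (q i - p i) * min (int j) \<bar>q i - p i\<bar>" using \<open>i < d\<close> by (simp add: w_def)
    then show "min (p i) (q i) \<le> w j i \<and> w j i \<le> max (p i) (q i)"
      using sg1[of "q i - p i" j] by linarith
  qed
  have step: "Ginf_adj d (w j) (w (Suc j))" if "j < L" for j
  proof -
    have le: "\<bar>w j i - w (Suc j) i\<bar> \<le> 1" if "i < d" for i
    proof -
      have "w j i - w (Suc j) i = - (sgn (q i - p i) * min (int (Suc j)) \<bar>q i - p i\<bar> - sgn (q i - p i) * min (int j) \<bar>q i - p i\<bar>)"
        using \<open>i < d\<close> by (simp add: w_def)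
      then show ?thesis using sg2[of "q i - p i" j] by (simp only: abs_minus_cancel)
    qed
    have "linf d p q > 0" using that L by linarith
    then obtain i0 where i0: "i0 < d" "\<bar>p i0 - q i0\<bar> = linf d p q" using linf_attained by blast
    then have "\<bar>q i0 - p i0\<bar> = int L" using L by (simp add: abs_minus_commute)
    moreover have "w j i0 - w (Suc j) i0 = - (sgn (q i0 - p i0) * min (int (Suc j)) \<bar>q i0 - p i0\<bar> - sgn (q i0 - p i0) * min (int j) \<bar>q i0 - p i0\<bar>)"
        using i0(1) by (simp add: w_def)
    ultimately have "\<bar>w j i0 - w (Suc j) i0\<bar> = 1"
      using that sg3[of j "q i0 - p i0"] by (simp only: abs_minus_cancel)
    then have "1 \<le> linf d (w j) (w (Suc j))" using linf_ge[OF i0(1), of "w j" "w (Suc j)"] by simp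
    moreover have "linf d (w j) (w (Suc j)) \<le> 1" using le by (simp add: linf_le_iff)
    ultimately show ?thesis unfolding Ginf_adj_def by simp
  qed
  have stepall: "\<forall>j<L. Ginf_adj d (w j) (w (Suc j))" using step by blast
  show ?thesis by (rule that[OF w0 wL[unfolded L_def] wZ stepall[unfolded L_def] btw])
qed

lemma linf_gdist:
  assumes "p \<in> Zsp d" "q \<in> Zsp d" "linf d p q \<le> int r"
  shows "gdist_le (Zsp d) (Ginf_adj d) r p q"
proof -
  obtain w where w: "w 0 = p" "w (nat (linf d p q)) = q" "\<forall>j. w j \<in> Zsp d"
    "\<forall>j<nat (linf d p q). Ginf_adj d (w j) (w (Suc j))"
    "\<forall>j. \<forall>i<d. min (p i) (q i) \<le> w j i \<and> w j i \<le> max (p i) (q i)"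
    by (rule straight_walk[OF assms(1,2)])
  have "walk_len (Zsp d) (Ginf_adj d) (nat (linf d p q)) p q"
    unfolding walk_len_def by (rule exI[of _ w]) (simp add: w)
  moreover have "nat (linf d p q) \<le> r" using assms(3) by simp
  ultimately show ?thesis unfolding gdist_le_def by blast
qed


lemma div_step_le:
  fixes u v M :: int
  assumes "M > 0" "0 \<le> v - u" "v - u \<le> M"
  shows "u div M \<le> v div M \<and> v div M \<le> u div M + 1"
proof
  show "u div M \<le> v div M" using assms by (intro zdiv_mono1) auto
  have "v div M \<le> (u + M) div M" using assms by (intro zdiv_mono1) auto
  also have "\<dots> = u div M + 1" using assms by (simp add: div_add_self2)
  finally show "v div M \<le> u div M + 1" .
qed

lemma div_abs_le:
  fixes u v M :: int
  assumes "M > 0" "\<bar>v - u\<bar> \<le> M"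
  shows "\<bar>v div M - u div M\<bar> \<le> 1"
proof (cases "u \<le> v")
  case True then have "0 \<le> v - u" "v - u \<le> M" using assms(2) by (auto simp: abs_le_iff)
  from div_step_le[OF assms(1) this] have "u div M \<le> v div M \<and> v div M \<le> u div M + 1" .
  then show ?thesis unfolding abs_le_iff by linarith
next
  case False then have "0 \<le> u - v" "u - v \<le> M" using assms(2) by (auto simp: abs_le_iff)
  from div_step_le[OF assms(1) this] have "v div M \<le> u div M \<and> u div M \<le> v div M + 1" .
  then show ?thesis unfolding abs_le_iff by linarith
qed

fun Sb :: "int \<Rightarrow> (nat \<Rightarrow> int) \<Rightarrow> nat \<Rightarrow> int" where
  "Sb r p 0 = 0"
| "Sb r p (Suc k) = Sb r p k + (p k + r * Sb r p k) div (int (Suc k) * r)"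

lemma Sb_inv:
  assumes r: "r \<ge> 1" and close: "\<forall>i<d. \<bar>q i - p i\<bar> \<le> r" and kd: "k \<le> d"
  shows "(\<forall>j\<le>k. Sb r q j = Sb r p j) \<or>
         (1 \<le> Sb r q k - Sb r p k \<and> Sb r q k - Sb r p k \<le> int k) \<or>
         (- int k \<le> Sb r q k - Sb r p k \<and> Sb r q k - Sb r p k \<le> -1)"
  using kd
proof (induction k)
  case 0 then show ?case by simp
next
  case (Suc k)
  then have kd: "k < d" and IH: "(\<forall>j\<le>k. Sb r q j = Sb r p j) \<or>
         (1 \<le> Sb r q k - Sb r p k \<and> Sb r q k - Sb r p k \<le> int k) \<or>
         (- int k \<le> Sb r q k - Sb r p k \<and> Sb r q k - Sb r p k \<le> -1)" by auto
  define M where "M = int (Suc k) * r"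
  define u where "u = p k + r * Sb r p k"
  define v where "v = q k + r * Sb r q k"
  define D where "D = Sb r q k - Sb r p k"
  have M: "M > 0" using r by (simp add: M_def)
  have Mr: "M = r + r * int k" by (simp add: M_def algebra_simps)
  have cl: "\<bar>q k - p k\<bar> \<le> r" using close kd by auto
  have vu: "v - u = (q k - p k) + r * D" by (simp add: u_def v_def D_def algebra_simps)
  have D': "Sb r q (Suc k) - Sb r p (Suc k) = D + (v div M - u div M)"
    by (simp add: u_def v_def D_def M_def)
  from IH consider (z) "\<forall>j\<le>k. Sb r q j = Sb r p j" | (pos) "1 \<le> D" "D \<le> int k" | (neg) "- int k \<le> D" "D \<le> -1"
    unfolding D_def by blast
  then show ?case
  proof cases
    case z
    then have "D = 0" by (simp add: D_def)
    have rk: "r * int k \<ge> 0" using r by simp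
    have "\<bar>v - u\<bar> = \<bar>q k - p k\<bar>" using vu \<open>D = 0\<close> by simp
    then have "\<bar>v - u\<bar> \<le> M" using cl Mr rk by linarith
    from div_abs_le[OF M this] have d1: "\<bar>v div M - u div M\<bar> \<le> 1" .
    show ?thesis
    proof (cases "v div M - u div M = 0")
      case True
      then have "Sb r q (Suc k) = Sb r p (Suc k)" using D' \<open>D = 0\<close> by simp
      then have "\<forall>j\<le>Suc k. Sb r q j = Sb r p j" using z by (metis le_Suc_eq)
      then show ?thesis by blast
    next
      case False
      then show ?thesis using d1 D' \<open>D = 0\<close> unfolding abs_le_iff by auto
    qed
  next
    case pos
    have "r * D \<ge> r * 1" using pos r by (intro mult_left_mono) auto
    moreover have "r * D \<le> r * int k" using pos r by (intro mult_left_mono) auto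
    ultimately have "0 \<le> v - u" "v - u \<le> M" using vu cl Mr unfolding abs_le_iff by auto
    from div_step_le[OF M this] show ?thesis using D' pos by auto
  next
    case neg
    have "r * D \<le> r * (-1)" using neg r by (intro mult_left_mono) auto
    moreover have "r * D \<ge> r * (- int k)" using neg r by (intro mult_left_mono) auto
    ultimately have "0 \<le> u - v" "u - v \<le> M" using vu cl Mr unfolding abs_le_iff by auto
    from div_step_le[OF M this] show ?thesis using D' neg by auto
  qed
qed

lemma Sb_sep:
  assumes r: "r \<ge> 1" and close: "\<forall>i<d. \<bar>q i - p i\<bar> \<le> r"
    and md: "Sb r q d mod int (Suc d) = Sb r p d mod int (Suc d)"
  shows "\<forall>j\<le>d. Sb r q j = Sb r p j"
proof -
  have dv: "int (Suc d) dvd (Sb r q d - Sb r p d)" using md by (simp add: mod_eq_dvd_iff)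
  have "\<not> (1 \<le> Sb r q d - Sb r p d \<and> Sb r q d - Sb r p d \<le> int d)"
  proof
    assume a: "1 \<le> Sb r q d - Sb r p d \<and> Sb r q d - Sb r p d \<le> int d"
    then have "\<bar>int (Suc d)\<bar> \<le> \<bar>Sb r q d - Sb r p d\<bar>" using dv by (intro dvd_imp_le_int) auto
    with a show False by simp
  qed
  moreover have "\<not> (- int d \<le> Sb r q d - Sb r p d \<and> Sb r q d - Sb r p d \<le> -1)"
  proof
    assume a: "- int d \<le> Sb r q d - Sb r p d \<and> Sb r q d - Sb r p d \<le> -1"
    then have "\<bar>int (Suc d)\<bar> \<le> \<bar>Sb r q d - Sb r p d\<bar>" using dv by (intro dvd_imp_le_int) auto
    with a show False by simp
  qed
  ultimately show ?thesis using Sb_inv[OF r close order_refl] by blast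
qed

lemma Sb_between:
  assumes r: "r \<ge> 1" and eq: "\<forall>j\<le>d. Sb r q j = Sb r p j"
    and btw: "\<forall>i<d. min (p i) (q i) \<le> z i \<and> z i \<le> max (p i) (q i)"
  shows "\<forall>j\<le>d. Sb r z j = Sb r p j"
proof (intro allI impI)
  fix j assume "j \<le> d"
  then show "Sb r z j = Sb r p j"
  proof (induction j)
    case 0 then show ?case by simp
  next
    case (Suc j)
    then have jd: "j < d" and IH: "Sb r z j = Sb r p j" by auto
    define M where "M = int (Suc j) * r"
    have M: "M > 0" using r by (simp add: M_def)
    have qj: "Sb r q j = Sb r p j" using eq jd by auto
    have "Sb r q (Suc j) = Sb r p (Suc j)" using eq Suc.prems by blast
    then have equ: "(q j + r * Sb r p j) div M = (p j + r * Sb r p j) div M"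
      using qj by (simp add: M_def)
    have bz: "min (p j) (q j) \<le> z j \<and> z j \<le> max (p j) (q j)" using btw jd by auto
    have "(z j + r * Sb r p j) div M = (p j + r * Sb r p j) div M"
    proof (cases "p j \<le> q j")
      case True
      then have "(p j + r * Sb r p j) div M \<le> (z j + r * Sb r p j) div M"
        "(z j + r * Sb r p j) div M \<le> (q j + r * Sb r p j) div M"
        using bz M by (auto intro: zdiv_mono1)
      then show ?thesis using equ by linarith
    next
      case False
      then have "(q j + r * Sb r p j) div M \<le> (z j + r * Sb r p j) div M"
        "(z j + r * Sb r p j) div M \<le> (p j + r * Sb r p j) div M"
        using bz M by (auto intro: zdiv_mono1)
      then show ?thesis using equ by linarith
    qed
    then show ?case using IH by (simp add: M_def)
  qed
qed

definition bcol :: "nat \<Rightarrow> int \<Rightarrow> (nat \<Rightarrow> int) \<Rightarrow> nat" where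
  "bcol d r p = nat (Sb r p d mod int (Suc d)) + 1"

lemma bcol_range: "bcol d r p \<in> {1..Suc d}"
proof -
  have "Sb r p d mod int (Suc d) < int (Suc d)" "0 \<le> Sb r p d mod int (Suc d)" by simp_all
  then have "nat (Sb r p d mod int (Suc d)) \<le> d" by linarith
  then show ?thesis unfolding bcol_def by auto
qed

lemma bcol_eq: "bcol d r q = bcol d r p \<Longrightarrow> Sb r q d mod int (Suc d) = Sb r p d mod int (Suc d)"
  unfolding bcol_def by (simp add: eq_nat_nat_iff)

definition brick :: "nat \<Rightarrow> int \<Rightarrow> (nat \<Rightarrow> int) \<Rightarrow> (nat \<Rightarrow> int) set" where
  "brick d r x = {z \<in> Zsp d. \<forall>j\<le>d. Sb r z j = Sb r x j}"

lemma brick_bcol: "z \<in> brick d r x \<Longrightarrow> bcol d r z = bcol d r x"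
  unfolding brick_def bcol_def by auto

lemma brick_card:
  assumes r: "r \<ge> 1"
  shows "finite (brick d r x) \<and> card (brick d r x) \<le> fact d * nat r ^ d"
proof -
  define M where "M k = int (Suc k) * r" for k
  define c where "c k = (x k + r * Sb r x k) div M k" for k
  define lo where "lo k = M k * c k - r * Sb r x k" for k
  define I where "I k = {lo k ..< lo k + M k}" for k
  have Mpos: "M k > 0" for k using r by (simp add: M_def)
  have mem: "z k \<in> I k" if z: "z \<in> brick d r x" and k: "k < d" for z k
  proof -
    have all: "\<forall>j\<le>d. Sb r z j = Sb r x j" using z by (simp add: brick_def)
    have e1: "Sb r z k = Sb r x k" using all k by simp
    have e2: "Sb r z (Suc k) = Sb r x (Suc k)" using all k Suc_leI by blast
    have "Sb r z (Suc k) = Sb r z k + (z k + r * Sb r z k) div M k"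
      "Sb r x (Suc k) = Sb r x k + (x k + r * Sb r x k) div M k" by (simp_all add: M_def)
    then have "(z k + r * Sb r x k) div M k = c k" using e1 e2 by (simp add: c_def)
    moreover have "M k * ((z k + r * Sb r x k) div M k) + (z k + r * Sb r x k) mod M k = z k + r * Sb r x k"
      by (rule mult_div_mod_eq)
    moreover have "0 \<le> (z k + r * Sb r x k) mod M k" "(z k + r * Sb r x k) mod M k < M k"
      using Mpos[of k] by auto
    ultimately show ?thesis unfolding I_def lo_def by auto
  qed
  define R where "R z = restrict z {..<d}" for z :: "nat \<Rightarrow> int"
  have inj: "inj_on R (brick d r x)"
  proof
    fix z1 z2 assume z: "z1 \<in> brick d r x" "z2 \<in> brick d r x" "R z1 = R z2"
    show "z1 = z2"
    proof
      fix i show "z1 i = z2 i"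
      proof (cases "i < d")
        case True then show ?thesis using fun_cong[OF z(3), of i] by (simp add: R_def)
      next
        case False then show ?thesis using z(1,2) by (auto simp: brick_def Zsp_def)
      qed
    qed
  qed
  have sub: "R ` brick d r x \<subseteq> PiE {..<d} I"
  proof
    fix y assume "y \<in> R ` brick d r x"
    then obtain z where z: "z \<in> brick d r x" "y = R z" by blast
    show "y \<in> PiE {..<d} I" unfolding z(2) R_def using mem[OF z(1)] by (auto intro: restrict_PiE)
  qed
  have fin: "finite (PiE {..<d} I)" by (auto simp: I_def intro!: finite_PiE)
  have "card (PiE {..<d} I) = (\<Prod>k<d. card (I k))" by (simp add: card_PiE)
  also have "\<dots> = (\<Prod>k<d. Suc k * nat r)"
  proof (intro prod.cong refl)
    fix k
    have "card (I k) = nat (M k)" by (simp add: I_def)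
    also have "\<dots> = Suc k * nat r" unfolding M_def by (simp only: nat_mult_distrib[OF of_nat_0_le_iff] nat_int)
    finally show "card (I k) = Suc k * nat r" .
  qed
  also have "\<dots> = fact d * nat r ^ d"
    by (simp only: prod.distrib fact_prod_Suc atLeast0LessThan prod_constant card_lessThan of_nat_id)
  finally have cPi: "card (PiE {..<d} I) = fact d * nat r ^ d" .
  have "finite (R ` brick d r x)" using finite_subset[OF sub fin] .
  then have "finite (brick d r x)" using inj finite_imageD by blast
  moreover have "card (brick d r x) \<le> fact d * nat r ^ d"
    using card_mono[OF fin sub] card_image[OF inj] cPi by simp
  ultimately show ?thesis by blast
qed


lemma close_of_linf: assumes "linf d p q \<le> r" shows "\<forall>i<d. \<bar>q i - p i\<bar> \<le> r"
proof (intro allI impI)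
  fix i assume "i < d"
  then have "\<bar>p i - q i\<bar> \<le> linf d p q" by (rule linf_ge)
  then show "\<bar>q i - p i\<bar> \<le> r" using assms abs_minus_commute[of "q i" "p i"] by linarith
qed

lemma comp_in_brick:
  assumes r: "r \<ge> 1" and y: "y \<in> colour_comp (Zsp d) (Ginf_adj d) (bcol d r) x"
  shows "y \<in> brick d r x"
proof -
  obtain l where "walk_len {v\<in>Zsp d. bcol d r v = bcol d r x} (Ginf_adj d) l x y"
    using y unfolding colour_comp_def by blast
  then obtain w where w: "w 0 = x" "w l = y" "\<forall>i\<le>l. w i \<in> {v\<in>Zsp d. bcol d r v = bcol d r x}"
     "\<forall>i<l. Ginf_adj d (w i) (w (Suc i))"
     "\<forall>j\<le>l. walk_len {v\<in>Zsp d. bcol d r v = bcol d r x} (Ginf_adj d) j x (w j)"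
    by (rule walk_len_prefix)
  have "w j \<in> brick d r x" if "j \<le> l" for j
    using that
  proof (induction j)
    case 0 then show ?case using w(1,3) by (auto simp: brick_def)
  next
    case (Suc j)
    then have wj: "w j \<in> brick d r x" and jl: "j < l" by auto
    have adj: "linf d (w j) (w (Suc j)) \<le> r" using w(4) jl r by (auto simp: Ginf_adj_def)
    have c1: "bcol d r (w (Suc j)) = bcol d r (w j)"
      using w(3) jl Suc.prems brick_bcol[OF wj] by auto
    have "\<forall>k\<le>d. Sb r (w (Suc j)) k = Sb r (w j) k"
      by (rule Sb_sep[OF r close_of_linf[OF adj] bcol_eq[OF c1]])
    moreover have "w (Suc j) \<in> Zsp d" using w(3) Suc.prems by auto
    ultimately show ?case using wj by (auto simp: brick_def)
  qed
  then show ?thesis using w(2) by auto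
qed

lemma brick_in_comp:
  assumes r: "r \<ge> 1" and x: "x \<in> Zsp d" and y: "y \<in> brick d r x"
  shows "y \<in> colour_comp (Zsp d) (Ginf_adj d) (bcol d r) x"
proof -
  have yZ: "y \<in> Zsp d" and eq: "\<forall>j\<le>d. Sb r y j = Sb r x j" using y by (auto simp: brick_def)
  obtain w where w: "w 0 = x" "w (nat (linf d x y)) = y" "\<forall>j. w j \<in> Zsp d"
    "\<forall>j<nat (linf d x y). Ginf_adj d (w j) (w (Suc j))"
    "\<forall>j. \<forall>i<d. min (x i) (y i) \<le> w j i \<and> w j i \<le> max (x i) (y i)"
    by (rule straight_walk[OF x yZ])
  have "w j \<in> brick d r x" for j
  proof -
    have "\<forall>i<d. min (x i) (y i) \<le> w j i \<and> w j i \<le> max (x i) (y i)" using w(5) by blast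
    from Sb_between[OF r eq this] show ?thesis using w(3) by (auto simp: brick_def)
  qed
  then have "\<forall>j. w j \<in> {v\<in>Zsp d. bcol d r v = bcol d r x}" using brick_bcol w(3) by blast
  then have "walk_len {v\<in>Zsp d. bcol d r v = bcol d r x} (Ginf_adj d) (nat (linf d x y)) x y"
    unfolding walk_len_def using w(1,2,4) by blast
  then show ?thesis unfolding colour_comp_def by blast
qed

lemma brick_clustered:
  fixes d r :: nat
  assumes r: "r \<ge> 1"
  shows "clustered_col (Zsp d) (Ginf_adj d) r (Suc d) (real (fact d * r ^ d)) (bcol d (int r))"
  unfolding clustered_col_def
proof (intro conjI ballI impI)
  have "fact d * r ^ d > 0" using r by simp
  then show "real (fact d * r ^ d) > 0" by linarith
  fix x assume x: "x \<in> Zsp d"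
  show "bcol d (int r) x \<in> {1..Suc d}" by (rule bcol_range)
  have r': "int r \<ge> 1" using r by simp
  have sub: "colour_comp (Zsp d) (Ginf_adj d) (bcol d (int r)) x \<subseteq> brick d (int r) x"
    using comp_in_brick[OF r'] by blast
  have bc: "finite (brick d (int r) x) \<and> card (brick d (int r) x) \<le> fact d * nat (int r) ^ d"
    by (rule brick_card[OF r'])
  show "finite (colour_comp (Zsp d) (Ginf_adj d) (bcol d (int r)) x)"
    using finite_subset[OF sub] bc by blast
  have "card (colour_comp (Zsp d) (Ginf_adj d) (bcol d (int r)) x) \<le> fact d * r ^ d"
    using card_mono[OF _ sub] bc by simp
  then show "real (card (colour_comp (Zsp d) (Ginf_adj d) (bcol d (int r)) x)) \<le> real (fact d * r ^ d)"
    by linarith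
next
  fix x y assume x: "x \<in> Zsp d" and y: "y \<in> Zsp d"
    and h: "bcol d (int r) x = bcol d (int r) y \<and>
      colour_comp (Zsp d) (Ginf_adj d) (bcol d (int r)) x \<noteq> colour_comp (Zsp d) (Ginf_adj d) (bcol d (int r)) y"
  have r': "int r \<ge> 1" using r by simp
  show "\<not> gdist_le (Zsp d) (Ginf_adj d) r x y"
  proof
    assume "gdist_le (Zsp d) (Ginf_adj d) r x y"
    then obtain l where l: "l \<le> r" "walk_len (Zsp d) (Ginf_adj d) l x y" unfolding gdist_le_def by blast
    have "linf d x y \<le> int r" using walk_linf[OF l(2)] l(1) by linarith
    from close_of_linf[OF this] have cl: "\<forall>i<d. \<bar>y i - x i\<bar> \<le> int r" .
    have "\<forall>k\<le>d. Sb (int r) y k = Sb (int r) x k"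
      using Sb_sep[OF r' cl bcol_eq] h by metis
    then have "y \<in> brick d (int r) x" using y by (auto simp: brick_def)
    from brick_in_comp[OF r' x this]
    have "colour_comp (Zsp d) (Ginf_adj d) (bcol d (int r)) y = colour_comp (Zsp d) (Ginf_adj d) (bcol d (int r)) x"
      by (rule cc_eq) (rule Ginf_sym)
    with h show False by simp
  qed
qed


definition ucube :: "(real^'n) set" where
  "ucube = cbox 0 (\<chi> s. 1)"

lemma mem_ucube: "x \<in> ucube \<longleftrightarrow> (\<forall>s. 0 \<le> x $ s \<and> x $ s \<le> 1)"
  unfolding ucube_def mem_box_cart by simp

lemma poincare_miranda:
  fixes g :: "real^'n \<Rightarrow> real^'n"
  assumes cont: "continuous_on ucube g"
    and b0: "\<And>x i. x \<in> ucube \<Longrightarrow> x $ i = 0 \<Longrightarrow> g x $ i \<le> 0"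
    and b1: "\<And>x i. x \<in> ucube \<Longrightarrow> x $ i = 1 \<Longrightarrow> g x $ i \<ge> 0"
  shows "\<exists>x\<in>ucube. g x = 0"
proof -
  define h where "h x = (\<chi> i. max 0 (min 1 (x $ i - g x $ i)))" for x
  have "continuous_on ucube h"
    unfolding h_def by (intro continuous_intros cont)
  moreover have "h \<in> ucube \<rightarrow> ucube"
    by (auto simp: h_def mem_ucube)
  moreover have "compact (ucube :: (real^'n) set)" "convex (ucube :: (real^'n) set)" "(ucube :: (real^'n) set) \<noteq> {}"
    using mem_ucube[of 0] by (auto simp: ucube_def)
  ultimately obtain x where x: "x \<in> ucube" "h x = x"
    using brouwer[of ucube h] by blast
  have "g x $ i = 0" for i
  proof -
    have e: "max 0 (min 1 (x $ i - g x $ i)) = x $ i"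
      using arg_cong[OF x(2), of "\<lambda>v. v $ i"] by (simp add: h_def)
    have r: "0 \<le> x $ i" "x $ i \<le> 1" using x(1) by (auto simp: mem_ucube)
    consider "x $ i = 0" | "x $ i = 1" | "0 < x $ i \<and> x $ i < 1" using r by linarith
    then show ?thesis
    proof cases
      case 1 then show ?thesis using b0[OF x(1) 1] e by (auto simp: max_def min_def split: if_splits)
    next
      case 2 then show ?thesis using b1[OF x(1) 2] e by (auto simp: max_def min_def split: if_splits)
    next
      case 3 then show ?thesis using e by (auto simp: max_def min_def split: if_splits)
    qed
  qed
  then have "g x = 0" by (simp add: vec_eq_iff)
  then show ?thesis using x(1) by blast
qed

definition cube :: "nat \<Rightarrow> ('n::finite \<Rightarrow> nat) \<Rightarrow> (real^'n) set" where
  "cube k a = cbox (\<chi> s. (real (a s) - 1) / real k) (\<chi> s. real (a s) / real k)"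

definition idx :: "nat \<Rightarrow> ('n::finite \<Rightarrow> nat) set" where
  "idx k = {a. \<forall>s. 1 \<le> a s \<and> a s \<le> k}"

lemma cubes_eq: "cubes k = cube k ` idx k"
  unfolding cubes_def cube_def idx_def by auto

lemma mem_cube: "x \<in> cube k a \<longleftrightarrow> (\<forall>s. (real (a s) - 1) / real k \<le> x $ s \<and> x $ s \<le> real (a s) / real k)"
  unfolding cube_def mem_box_cart by simp

lemma finite_idx: "finite (idx k :: ('n::finite \<Rightarrow> nat) set)"
proof -
  have "idx k = (Pi\<^sub>E UNIV (\<lambda>_. {1..k}) :: ('n \<Rightarrow> nat) set)" by (auto simp: idx_def PiE_UNIV_domain)
  moreover have "finite (Pi\<^sub>E UNIV (\<lambda>_. {1..k}) :: ('n \<Rightarrow> nat) set)" by (intro finite_PiE) auto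
  ultimately show ?thesis by simp
qed

lemma cube_touch:
  assumes k: "k \<ge> 1" and x: "x \<in> cube k a" "x \<in> cube k b"
  shows "a s \<le> b s + 1"
proof -
  have "(real (a s) - 1) / real k \<le> real (b s) / real k" using x unfolding mem_cube by (meson order_trans)
  then have "real (a s) - 1 \<le> real (b s)" using k by (simp add: divide_right_mono_neg divide_le_cancel)
  then show ?thesis by linarith
qed

lemma touch_cube:
  fixes a b :: "'n::finite \<Rightarrow> nat"
  assumes k: "k \<ge> 1" and ab: "\<forall>s. a s \<le> b s + 1 \<and> b s \<le> a s + 1"
  shows "cube k a \<inter> cube k b \<noteq> {}"
proof -
  define z :: "real^'n" where "z = (\<chi> s. real (min (a s) (b s)) / real k)"
  have kp: "real k > 0" using k by simp
  have m: "real (c s) - 1 \<le> real (min (a s) (b s)) \<and> real (min (a s) (b s)) \<le> real (c s)"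
    if "c = a \<or> c = b" for c s
  proof -
    have "a s \<le> b s + 1" "b s \<le> a s + 1" using ab by auto
    then have "real (a s) \<le> real (b s) + 1" "real (b s) \<le> real (a s) + 1" by linarith+
    then show ?thesis using that by (auto simp: min_def)
  qed
  have "(real (c s) - 1) / real k \<le> z $ s \<and> z $ s \<le> real (c s) / real k"
    if "c = a \<or> c = b" for c s
    using m[OF that, of s] kp unfolding z_def by (auto intro: divide_right_mono)
  then have "z \<in> cube k a" "z \<in> cube k b" unfolding mem_cube by blast+
  then show ?thesis by blast
qed

lemma cube_face0:
  assumes k: "k \<ge> 1" and a: "a \<in> idx k" and x: "x \<in> cube k a" "x $ i = 0"
  shows "a i = 1"
proof -
  have "(real (a i) - 1) / real k \<le> 0" using x unfolding mem_cube by metis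
  then have "real (a i) - 1 \<le> 0" using k by (simp add: divide_le_0_iff)
  then show ?thesis using a by (auto simp: idx_def intro: antisym)
qed

lemma cube_face1:
  assumes k: "k \<ge> 1" and a: "a \<in> idx k" and x: "x \<in> cube k a" "x $ i = 1"
  shows "a i = k"
proof -
  have "1 \<le> real (a i) / real k" using x unfolding mem_cube by metis
  then have "real k \<le> real (a i)" using k by (simp add: le_divide_eq)
  then show ?thesis using a by (auto simp: idx_def intro: antisym)
qed

lemma cube_cover:
  assumes k: "k \<ge> 1" and x: "x \<in> ucube"
  shows "\<exists>a\<in>idx k. x \<in> cube k a"
proof -
  define a where "a s = max 1 (nat \<lceil>real k * x $ s\<rceil>)" for s
  have kp: "real k > 0" using k by simp
  have props: "1 \<le> a s \<and> a s \<le> k \<and> (real (a s) - 1) / real k \<le> x $ s \<and> x $ s \<le> real (a s) / real k" for s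
  proof -
    have r: "0 \<le> x $ s" "x $ s \<le> 1" using x by (auto simp: mem_ucube)
    have t0: "0 \<le> real k * x $ s" "real k * x $ s \<le> real k" using r kp by (auto simp: mult_left_le)
    have c1: "real_of_int \<lceil>real k * x $ s\<rceil> \<ge> real k * x $ s" by (rule le_of_int_ceiling)
    have c2: "real_of_int \<lceil>real k * x $ s\<rceil> < real k * x $ s + 1" using ceiling_correct[of "real k * x $ s"] by linarith
    have c3: "\<lceil>real k * x $ s\<rceil> \<le> int k" using t0(2) by (simp add: ceiling_le_iff)
    have c4: "\<lceil>real k * x $ s\<rceil> \<ge> 0" using t0(1) by simp
    have "real (a s) = max 1 (real_of_int \<lceil>real k * x $ s\<rceil>)" using c4 by (simp add: a_def of_nat_max)
    then have ra: "real (a s) = max 1 (real_of_int \<lceil>real k * x $ s\<rceil>)" .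
    have A: "real (a s) - 1 \<le> real k * x $ s" using ra c2 t0(1) by (auto simp: max_def)
    have B: "real k * x $ s \<le> real (a s)" using ra c1 by (auto simp: max_def)
    have "a s \<le> k" using c3 k by (simp add: a_def nat_le_iff)
    moreover have "1 \<le> a s" by (simp add: a_def)
    moreover have "(real (a s) - 1) / real k \<le> x $ s" using A kp by (simp add: divide_le_eq mult.commute)
    moreover have "x $ s \<le> real (a s) / real k" using B kp by (simp add: le_divide_eq mult.commute)
    ultimately show ?thesis by blast
  qed
  then show ?thesis unfolding idx_def mem_cube by blast
qed


definition Tr :: "nat \<Rightarrow> (('n::finite \<Rightarrow> nat) \<Rightarrow> 'n) \<Rightarrow> 'n \<Rightarrow> ('n \<Rightarrow> nat) \<Rightarrow> ('n \<Rightarrow> nat) \<Rightarrow> bool" where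
  "Tr k col i a b \<longleftrightarrow> a \<in> idx k \<and> b \<in> idx k \<and> col a = i \<and> col b = i \<and> (\<forall>s. a s \<le> b s + 1 \<and> b s \<le> a s + 1)"

lemma Tr_reach_props:
  assumes "(Tr k col i)\<^sup>*\<^sup>* a0 a" "a0 \<in> idx k" "col a0 = i"
  shows "a \<in> idx k \<and> col a = i"
  using assms by (induction rule: rtranclp_induct) (auto simp: Tr_def)

lemma closed_face: "closed {z::real^'n. z $ i = c}"
proof -
  have "{z::real^'n. z $ i = c} = {z. z $ i \<le> c} \<inter> {z. z $ i \<ge> c}" by auto
  then show ?thesis using closed_halfspace_component_le_cart closed_halfspace_component_ge_cart
    by (metis closed_Int)
qed

theorem hex:
  fixes col :: "('n::finite \<Rightarrow> nat) \<Rightarrow> 'n"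
  assumes k: "k \<ge> 1"
  shows "\<exists>i a0 a1. a0 \<in> idx k \<and> col a0 = i \<and> a0 i = 1 \<and> a1 i = k \<and> (Tr k col i)\<^sup>*\<^sup>* a0 a1"
proof (rule ccontr)
  assume "\<not> ?thesis"
  then have H: "\<And>i a0 a1. a0 \<in> idx k \<Longrightarrow> col a0 = i \<Longrightarrow> a0 i = 1 \<Longrightarrow> (Tr k col i)\<^sup>*\<^sup>* a0 a1 \<Longrightarrow> a1 i \<noteq> k"
    by blast
  define Reach where "Reach i = {a. \<exists>a0. a0 \<in> idx k \<and> col a0 = i \<and> a0 i = 1 \<and> (Tr k col i)\<^sup>*\<^sup>* a0 a}" for i
  define NR where "NR i = {a\<in>idx k. col a = i \<and> a \<notin> Reach i}" for i
  define X where "X i = \<Union>(cube k ` Reach i) \<union> {z. z $ i = 0}" for i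
  define Y where "Y i = \<Union>(cube k ` NR i) \<union> {z. z $ i = 1}" for i
  have Rprops: "a \<in> idx k \<and> col a = i" if "a \<in> Reach i" for a i
    using that Tr_reach_props unfolding Reach_def by blast
  have Rfin: "finite (Reach i)" for i
    using Rprops finite_idx by (metis finite_subset subsetI)
  have NRfin: "finite (NR i)" for i
    by (rule finite_subset[of _ "idx k", OF _ finite_idx]) (auto simp: NR_def)
  have clX: "closed (X i)" for i
    unfolding X_def cube_def using Rfin closed_face by (intro closed_Un closed_Union) auto
  have clY: "closed (Y i)" for i
    unfolding Y_def cube_def using NRfin closed_face by (intro closed_Un closed_Union) auto
  have neX: "X i \<noteq> {}" for i
  proof -
    have "(0::real^'n) \<in> X i" by (simp add: X_def)
    then show ?thesis by blast
  qed
  have neY: "Y i \<noteq> {}" for i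
  proof -
    have "((\<chi> s. 1) :: real^'n) \<in> Y i" by (simp add: Y_def)
    then show ?thesis by blast
  qed
  have disj: "X i \<inter> Y i = {}" for i
  proof (rule ccontr)
    assume "X i \<inter> Y i \<noteq> {}"
    then obtain z where zX: "z \<in> X i" and zY: "z \<in> Y i" by blast
    from zX consider (A) a where "a \<in> Reach i" "z \<in> cube k a" | (Z) "z $ i = 0" unfolding X_def by blast
    then show False
    proof cases
      case A
      then obtain a0 where a0: "a0 \<in> idx k" "col a0 = i" "a0 i = 1" "(Tr k col i)\<^sup>*\<^sup>* a0 a"
        unfolding Reach_def by blast
      have ap: "a \<in> idx k" "col a = i" using Rprops[OF A(1)] by auto
      from zY consider (B) b where "b \<in> NR i" "z \<in> cube k b" | (O) "z $ i = 1" unfolding Y_def by blast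
      then show False
      proof cases
        case B
        have "Tr k col i a b" using B ap cube_touch[OF k A(2) B(2)] cube_touch[OF k B(2) A(2)]
          unfolding Tr_def NR_def by auto
        then have "(Tr k col i)\<^sup>*\<^sup>* a0 b" using a0(4) by (metis rtranclp.rtrancl_into_rtrancl)
        then have "b \<in> Reach i" using a0 unfolding Reach_def by blast
        then show False using B(1) unfolding NR_def by blast
      next
        case O
        have "a i = k" by (rule cube_face1[OF k ap(1) A(2) O])
        then show False using H[OF a0] by blast
      qed
    next
      case Z
      from zY consider (B) b where "b \<in> NR i" "z \<in> cube k b" | (O) "z $ i = 1" unfolding Y_def by blast
      then show False
      proof cases
        case B
        have bp: "b \<in> idx k" "col b = i" "b \<notin> Reach i" using B(1) unfolding NR_def by auto
        have "b i = 1" by (rule cube_face0[OF k bp(1) B(2) Z])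
        then have "b \<in> Reach i" using bp unfolding Reach_def by blast
        then show False using bp(3) by blast
      next
        case O then show False using Z by simp
      qed
    qed
  qed
  define g where "g x = (\<chi> i. infdist x (X i) - infdist x (Y i))" for x :: "real^'n"
  have "continuous_on ucube g"
    unfolding g_def by (intro continuous_intros)
  moreover have "g x $ i \<le> 0" if "x \<in> ucube" "x $ i = 0" for x i
  proof -
    have "x \<in> X i" using that by (simp add: X_def)
    then show ?thesis using infdist_nonneg[of x "Y i"] by (simp add: g_def)
  qed
  moreover have "g x $ i \<ge> 0" if "x \<in> ucube" "x $ i = 1" for x i
  proof -
    have "x \<in> Y i" using that by (simp add: Y_def)
    then show ?thesis using infdist_nonneg[of x "X i"] by (simp add: g_def)
  qed
  ultimately obtain x where x: "x \<in> ucube" "g x = 0" using poincare_miranda by blast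
  obtain a where a: "a \<in> idx k" "x \<in> cube k a" using cube_cover[OF k x(1)] by blast
  define i where "i = col a"
  have eqd: "infdist x (X i) = infdist x (Y i)"
    using arg_cong[OF x(2), of "\<lambda>v. v $ i"] by (simp add: g_def)
  show False
  proof (cases "a \<in> Reach i")
    case True
    then have "x \<in> X i" using a(2) by (auto simp: X_def)
    then have "infdist x (Y i) = 0" using eqd by simp
    then have "x \<in> Y i" using in_closed_iff_infdist_zero[OF clY neY] by blast
    then show False using disj \<open>x \<in> X i\<close> by blast
  next
    case False
    then have "a \<in> NR i" using a(1) by (simp add: NR_def i_def)
    then have "x \<in> Y i" using a(2) by (auto simp: Y_def)
    then have "infdist x (X i) = 0" using eqd by simp
    then have "x \<in> X i" using in_closed_iff_infdist_zero[OF clX neX] by blast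
    then show False using disj \<open>x \<in> Y i\<close> by blast
  qed
qed


lemma cube_ne: "cube k a \<noteq> {}"
proof -
  have "(\<chi> s. (real (a s) - 1) / real k) \<in> cube k a"
    unfolding mem_cube by (auto intro: divide_right_mono)
  then show ?thesis by blast
qed

lemma cube_connected: "connected (cube k a)"
  unfolding cube_def by (intro convex_connected convex_box)

lemma reach_connected:
  assumes k: "k \<ge> 1"
  shows "connected (\<Union>(cube k ` {a. (Tr k col i)\<^sup>*\<^sup>* a0 a}))"
proof -
  define U where "U = \<Union>(cube k ` {a. (Tr k col i)\<^sup>*\<^sup>* a0 a})"
  define A where "A = {W. connected W \<and> cube k a0 \<subseteq> W \<and> W \<subseteq> U}"
  have ex: "\<exists>W. connected W \<and> cube k a0 \<subseteq> W \<and> cube k a \<subseteq> W \<and> W \<subseteq> U"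
    if "(Tr k col i)\<^sup>*\<^sup>* a0 a" for a
    using that
  proof (induction rule: rtranclp_induct)
    case base
    show ?case by (rule exI[of _ "cube k a0"]) (auto simp: cube_connected U_def)
  next
    case (step a b)
    then obtain W where W: "connected W" "cube k a0 \<subseteq> W" "cube k a \<subseteq> W" "W \<subseteq> U" by blast
    have "\<forall>s. a s \<le> b s + 1 \<and> b s \<le> a s + 1" using step(2) by (simp add: Tr_def)
    from touch_cube[OF k this] have "W \<inter> cube k b \<noteq> {}" using W(3) by blast
    then have "connected (W \<union> cube k b)" using W(1) cube_connected by (intro connected_Un) auto
    moreover have "cube k b \<subseteq> U" using step(1,2) unfolding U_def
      by (metis (mono_tags, lifting) UN_upper mem_Collect_eq rtranclp.rtrancl_into_rtrancl)
    ultimately show ?case using W by (intro exI[of _ "W \<union> cube k b"]) auto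
  qed
  have "\<Union>A = U"
  proof
    show "\<Union>A \<subseteq> U" unfolding A_def by blast
    show "U \<subseteq> \<Union>A"
    proof
      fix z assume "z \<in> U"
      then obtain a where a: "(Tr k col i)\<^sup>*\<^sup>* a0 a" "z \<in> cube k a" unfolding U_def by blast
      then obtain W where "connected W" "cube k a0 \<subseteq> W" "cube k a \<subseteq> W" "W \<subseteq> U" using ex by blast
      then show "z \<in> \<Union>A" using a(2) unfolding A_def by blast
    qed
  qed
  moreover have "connected (\<Union>A)"
  proof (rule connected_Union)
    show "connected s" if "s \<in> A" for s using that by (simp add: A_def)
    have "cube k a0 \<subseteq> \<Inter>A" unfolding A_def by blast
    then show "\<Inter>A \<noteq> {}" using cube_ne by blast
  qed
  ultimately show ?thesis unfolding U_def by simp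
qed

lemma aff_dim_cube_int:
  fixes a c :: "'n::finite \<Rightarrow> nat"
  assumes k: "k \<ge> 1" and ac: "\<forall>s. a s \<le> c s + 1 \<and> c s \<le> a s + 1"
  shows "aff_dim (cube k a \<inter> cube k c) \<ge> int CARD('n) - int (card {s. a s \<noteq> c s})"
proof -
  define I where "I = cube k a \<inter> cube k c"
  define G where "G = {s. a s = c s}"
  have kp: "real k > 0" using k by simp
  define p :: "real^'n" where "p = (\<chi> s. if a s = c s then (real (a s) - 1) / real k else real (min (a s) (c s)) / real k)"
  have rac: "real (a s) \<le> real (c s) + 1" "real (c s) \<le> real (a s) + 1" for s
    using ac[rule_format, of s] by linarith+
  have pI: "p \<in> I"
  proof -
    have h: "(real (e s) - 1) / real k \<le> p $ s \<and> p $ s \<le> real (e s) / real k" if "e = a \<or> e = c" for e s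
    proof (cases "a s = c s")
      case True then show ?thesis using that kp by (auto intro: divide_right_mono simp: p_def)
    next
      case False
      have "real (e s) - 1 \<le> real (min (a s) (c s)) \<and> real (min (a s) (c s)) \<le> real (e s)"
        using that rac[of s] by (auto simp: min_def)
      moreover have "p $ s = real (min (a s) (c s)) / real k" using False by (simp add: p_def)
      ultimately show ?thesis using kp by (simp add: divide_right_mono)
    qed
    have "p \<in> cube k a" unfolding mem_cube using h[of a] by simp
    moreover have "p \<in> cube k c" unfolding mem_cube using h[of c] by simp
    ultimately show ?thesis unfolding I_def by blast
  qed
  have qI: "p + (1 / real k) *\<^sub>R axis s 1 \<in> I" if "s \<in> G" for s
  proof -
    have h: "(real (e t) - 1) / real k \<le> (p + (1 / real k) *\<^sub>R axis s 1) $ t \<and>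
          (p + (1 / real k) *\<^sub>R axis s 1) $ t \<le> real (e t) / real k" if "e = a \<or> e = c" for e t
    proof (cases "t = s")
      case True
      have "(real (a s) - 1) / real k + 1 / real k = real (a s) / real k" using kp by (simp add: field_simps)
      moreover have "(real (c s) - 1) / real k \<le> real (c s) / real k" using kp by (simp add: divide_right_mono)
      ultimately show ?thesis using True that \<open>s \<in> G\<close> kp by (auto simp: p_def G_def axis_def)
    next
      case False
      have "p \<in> cube k e" using pI that unfolding I_def by blast
      then have "(real (e t) - 1) / real k \<le> p $ t \<and> p $ t \<le> real (e t) / real k"
        unfolding mem_cube by blast
      then show ?thesis using False by (simp add: axis_def)
    qed
    have "p + (1 / real k) *\<^sub>R axis s 1 \<in> cube k a" unfolding mem_cube using h[of a] by simp
    moreover have "p + (1 / real k) *\<^sub>R axis s 1 \<in> cube k c" unfolding mem_cube using h[of c] by simp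
    ultimately show ?thesis unfolding I_def by blast
  qed
  define T where "T = (\<lambda>x. x - p) ` I"
  have ax: "axis s 1 \<in> span T" if "s \<in> G" for s
  proof -
    have "(1 / real k) *\<^sub>R axis s (1::real) \<in> T" unfolding T_def using qI[OF that] by force
    then have "real k *\<^sub>R ((1 / real k) *\<^sub>R axis s (1::real)) \<in> span T" by (intro span_mul span_base)
    then show ?thesis using kp by simp
  qed
  define W where "W = {x::real^'n. \<forall>i. i \<notin> G \<longrightarrow> x $ i = 0}"
  have WT: "W \<subseteq> span T"
  proof
    fix x assume "x \<in> W"
    have "x = (\<Sum>i\<in>UNIV. x $ i *s axis i 1)" by (rule basis_expansion[symmetric])
    also have "\<dots> = (\<Sum>i\<in>G. x $ i *s axis i 1)"
      using \<open>x \<in> W\<close> by (intro sum.mono_neutral_cong_right) (auto simp: W_def)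
    also have "\<dots> = (\<Sum>i\<in>G. x $ i *\<^sub>R axis i 1)" by (simp add: scalar_mult_eq_scaleR)
    also have "\<dots> \<in> span T" using ax by (intro span_sum span_mul) auto
    finally show "x \<in> span T" .
  qed
  have "vec.dim W = card G" unfolding W_def by (rule dim_substandard_cart)
  then have "dim W = card G" by (simp add: dim_vec_eq)
  moreover have "dim W \<le> dim T" using dim_subset[OF WT] by (simp add: dim_span)
  moreover have "aff_dim I = int (dim T)"
    unfolding T_def by (rule aff_dim_eq_dim_subtract) (rule hull_inc[OF pI])
  moreover have "card G = CARD('n) - card {s. a s \<noteq> c s}"
  proof -
    have "G = UNIV - {s. a s \<noteq> c s}" by (auto simp: G_def)
    then show ?thesis by (simp add: card_Diff_subset)
  qed
  moreover have "card {s. a s \<noteq> c s} \<le> CARD('n)" by (rule card_mono) auto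
  ultimately show ?thesis unfolding I_def by linarith
qed


lemma touch_sym: "(\<forall>s. a s \<le> b s + 1 \<and> b s \<le> a s + 1) \<Longrightarrow> (\<forall>s. b s \<le> a s + 1 \<and> a s \<le> b s + 1)"
  by auto

lemma Fdist_t:
  fixes F :: "(real^'n::finite) set \<Rightarrow> (nat \<Rightarrow> int)"
  assumes k: "k \<ge> 1" and m: "m \<le> CARD('n) - 1"
    and lip: "\<forall>K1\<in>cubes k. \<forall>K2\<in>cubes k. aff_dim (K1 \<inter> K2) \<ge> int m \<longrightarrow>
             linf d (F K1) (F K2) \<le> 1"
  shows "\<forall>a b. a \<in> idx k \<and> b \<in> idx k \<and> (\<forall>s. a s \<le> b s + 1 \<and> b s \<le> a s + 1) \<and>
           card {s. a s \<noteq> b s} \<le> t * (CARD('n) - m) \<longrightarrow> linf d (F (cube k a)) (F (cube k b)) \<le> int t"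
proof (induction t)
  case 0
  show ?case
  proof (intro allI impI)
    fix a b :: "'n \<Rightarrow> nat"
    assume h: "a \<in> idx k \<and> b \<in> idx k \<and> (\<forall>s. a s \<le> b s + 1 \<and> b s \<le> a s + 1) \<and> card {s. a s \<noteq> b s} \<le> 0 * (CARD('n) - m)"
    then have "{s. a s \<noteq> b s} = {}" by simp
    then have "a = b" by auto
    then show "linf d (F (cube k a)) (F (cube k b)) \<le> int 0" by (simp add: linf_self)
  qed
next
  case (Suc t)
  define nm where "nm = CARD('n) - m"
  have "CARD('n) > 0" by simp
  then have nm1: "nm \<ge> 1" using m unfolding nm_def by linarith
  have onestep: "linf d (F (cube k a)) (F (cube k b)) \<le> 1"
    if "a \<in> idx k" "b \<in> idx k" "\<forall>s. a s \<le> b s + 1 \<and> b s \<le> a s + 1" "card {s. a s \<noteq> b s} \<le> nm" for a b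
  proof -
    have "aff_dim (cube k a \<inter> cube k b) \<ge> int CARD('n) - int (card {s. a s \<noteq> b s})"
      by (rule aff_dim_cube_int[OF k that(3)])
    moreover have "int CARD('n) - int (card {s. a s \<noteq> b s}) \<ge> int m"
      using that(4) m unfolding nm_def by linarith
    ultimately have "aff_dim (cube k a \<inter> cube k b) \<ge> int m" by linarith
    moreover have "cube k a \<in> cubes k" "cube k b \<in> cubes k" using that(1,2) by (auto simp: cubes_eq)
    ultimately show ?thesis using lip by blast
  qed
  show ?case
  proof (intro allI impI)
    fix a b :: "'n \<Rightarrow> nat"
    assume h: "a \<in> idx k \<and> b \<in> idx k \<and> (\<forall>s. a s \<le> b s + 1 \<and> b s \<le> a s + 1) \<and> card {s. a s \<noteq> b s} \<le> Suc t * (CARD('n) - m)"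
    define D where "D = {s. a s \<noteq> b s}"
    show "linf d (F (cube k a)) (F (cube k b)) \<le> int (Suc t)"
    proof (cases "card D \<le> nm")
      case True
      then show ?thesis using onestep[of a b] h unfolding D_def by auto
    next
      case False
      then have "nm \<le> card D" by simp
      then obtain E where E: "E \<subseteq> D" "card E = nm" "finite E"
        by (rule obtain_subset_with_card_n)
      define c where "c s = (if s \<in> E then b s else a s)" for s
      have cidx: "c \<in> idx k" using h by (auto simp: c_def idx_def)
      have tac: "\<forall>s. a s \<le> c s + 1 \<and> c s \<le> a s + 1" using h by (auto simp: c_def)
      have tcb: "\<forall>s. c s \<le> b s + 1 \<and> b s \<le> c s + 1" using h by (auto simp: c_def)
      have ac: "{s. a s \<noteq> c s} = E" using E(1) by (auto simp: c_def D_def)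
      have cb: "{s. c s \<noteq> b s} = D - E" by (auto simp: c_def D_def)
      have "card (D - E) = card D - nm" using E by (simp add: card_Diff_subset)
      also have "\<dots> \<le> t * nm"
      proof -
        have "card D \<le> Suc t * nm" using h unfolding D_def nm_def by simp
        then have "card D \<le> nm + t * nm" by simp
        then show ?thesis by linarith
      qed
      finally have "card {s. c s \<noteq> b s} \<le> t * (CARD('n) - m)" using cb by (simp add: nm_def)
      then have 2: "linf d (F (cube k c)) (F (cube k b)) \<le> int t" using Suc.IH cidx h tcb by blast
      have 1: "linf d (F (cube k a)) (F (cube k c)) \<le> 1" using onestep[OF _ cidx tac] h ac E(2) by auto
      have "linf d (F (cube k a)) (F (cube k b)) \<le> linf d (F (cube k a)) (F (cube k c)) + linf d (F (cube k c)) (F (cube k b))"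
        by (rule linf_triangle)
      then show ?thesis using 1 2 by simp
    qed
  qed
qed

lemma Fdist:
  fixes F :: "(real^'n::finite) set \<Rightarrow> (nat \<Rightarrow> int)"
  assumes k: "k \<ge> 1" and m: "m \<le> CARD('n) - 1"
    and lip: "\<forall>K1\<in>cubes k. \<forall>K2\<in>cubes k. aff_dim (K1 \<inter> K2) \<ge> int m \<longrightarrow>
             linf d (F K1) (F K2) \<le> 1"
    and ab: "a \<in> idx k" "b \<in> idx k" "\<forall>s. a s \<le> b s + 1 \<and> b s \<le> a s + 1"
  shows "linf d (F (cube k a)) (F (cube k b)) \<le> int (m + 1)"
proof -
  have "card {s. a s \<noteq> b s} \<le> CARD('n)" by (rule card_mono) auto
  moreover have "CARD('n) \<le> (m + 1) * (CARD('n) - m)"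
  proof -
    have "CARD('n) > 0" by simp
    then have "m + 1 \<le> CARD('n)" using m by linarith
    then obtain j where j: "CARD('n) = m + 1 + j" using le_iff_add by blast
    then show ?thesis by (simp add: algebra_simps)
  qed
  ultimately show ?thesis using Fdist_t[OF k m lip, of "m + 1"] ab by auto
qed


lemma face_pts:
  assumes k: "k \<ge> 1"
  shows "a i = 1 \<Longrightarrow> \<exists>z\<in>cube k a. z $ i = 0"
    and "a i = k \<Longrightarrow> \<exists>z\<in>cube k a. z $ i = 1"
proof -
  have kp: "real k > 0" using k by simp
  have z0: "(\<chi> s. (real (a s) - 1) / real k) \<in> cube k a"
    unfolding mem_cube using kp by (auto intro: divide_right_mono)
  have z1: "(\<chi> s. real (a s) / real k) \<in> cube k a"
    unfolding mem_cube using kp by (auto intro: divide_right_mono)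
  show "a i = 1 \<Longrightarrow> \<exists>z\<in>cube k a. z $ i = 0" using z0 by (intro bexI[of _ "(\<chi> s. (real (a s) - 1) / real k)"]) auto
  show "a i = k \<Longrightarrow> \<exists>z\<in>cube k a. z $ i = 1" using z1 kp by (intro bexI[of _ "(\<chi> s. real (a s) / real k)"]) auto
qed

lemma chat_from_col:
  fixes m :: nat and f :: "(nat \<Rightarrow> int) \<Rightarrow> nat"
  assumes m: "m \<le> CARD('n::finite) - 1"
    and cc: "clustered_col (Zsp (CARD('n) - 1)) (Ginf_adj (CARD('n) - 1)) (m + 1) CARD('n) K f"
  shows "Chat_ok TYPE('n) m K"
proof -
  define d where "d = CARD('n) - 1"
  define V where "V = Zsp d"
  define E where "E = Ginf_adj d"
  have Kpos: "K > 0" and frange: "\<forall>x\<in>V. f x \<in> {1..CARD('n)}"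
    and fin: "\<forall>x\<in>V. finite (colour_comp V E f x) \<and> real (card (colour_comp V E f x)) \<le> K"
    and sep: "\<forall>x\<in>V. \<forall>y\<in>V. f x = f y \<and> colour_comp V E f x \<noteq> colour_comp V E f y \<longrightarrow> \<not> gdist_le V E (m + 1) x y"
    using cc unfolding clustered_col_def V_def E_def d_def by blast+
  obtain h :: "nat \<Rightarrow> 'n" where h: "bij_betw h {0..<CARD('n)} UNIV"
    using ex_bij_betw_nat_finite[of "UNIV :: 'n set"] by auto
  define \<beta> where "\<beta> c = h (c - 1)" for c
  have \<beta>inj: "c1 = c2" if "\<beta> c1 = \<beta> c2" "c1 \<in> {1..CARD('n)}" "c2 \<in> {1..CARD('n)}" for c1 c2
  proof -
    have "c1 - 1 \<in> {0..<CARD('n)}" "c2 - 1 \<in> {0..<CARD('n)}" using that(2,3) by auto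
    then have "c1 - 1 = c2 - 1" using that(1) h unfolding \<beta>_def bij_betw_def inj_on_def by blast
    then show ?thesis using that(2,3) by auto
  qed
  show ?thesis
    unfolding Chat_ok_def
  proof (intro conjI allI impI)
    show "K > 0" by (rule Kpos)
    fix k :: nat and F :: "(real^'n) set \<Rightarrow> (nat \<Rightarrow> int)"
    assume k: "k \<ge> 1"
    assume FF: "(\<forall>K\<in>cubes k. F K \<in> Zsp (CARD('n) - 1)) \<and>
         (\<forall>K1\<in>cubes k. \<forall>K2\<in>cubes k. aff_dim (K1 \<inter> K2) \<ge> int m \<longrightarrow>
             linf (CARD('n) - 1) (F K1) (F K2) \<le> 1)"
    have FV: "F (cube k a) \<in> V" if "a \<in> idx k" for a
      using FF that unfolding V_def d_def cubes_eq by blast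
    have lip: "\<forall>K1\<in>cubes k. \<forall>K2\<in>cubes k. aff_dim (K1 \<inter> K2) \<ge> int m \<longrightarrow> linf d (F K1) (F K2) \<le> 1"
      using FF unfolding d_def by blast
    define col where "col a = \<beta> (f (F (cube k a)))" for a
    obtain i a0 a1 where hx: "a0 \<in> idx k" "col a0 = i" "a0 i = 1" "a1 i = k" "(Tr k col i)\<^sup>*\<^sup>* a0 a1"
      using hex[OF k, of col] by blast
    define P where "P = colour_comp V E f (F (cube k a0))"
    have Esym: "\<And>a b. E a b \<Longrightarrow> E b a" unfolding E_def by (rule Ginf_sym)
    have inP: "F (cube k a) \<in> P" if "(Tr k col i)\<^sup>*\<^sup>* a0 a" for a
      using that
    proof (induction rule: rtranclp_induct)
      case base
      show ?case unfolding P_def by (rule cc_self[OF FV[OF hx(1)]])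
    next
      case (step a b)
      have t: "a \<in> idx k" "b \<in> idx k" "col a = i" "col b = i" "\<forall>s. a s \<le> b s + 1 \<and> b s \<le> a s + 1"
        using step(2) unfolding Tr_def by auto
      have fa: "f (F (cube k a)) \<in> {1..CARD('n)}" "f (F (cube k b)) \<in> {1..CARD('n)}"
        using frange FV t(1,2) by auto
      have feq: "f (F (cube k a)) = f (F (cube k b))"
        using \<beta>inj[OF _ fa] t(3,4) unfolding col_def by simp
      have "linf d (F (cube k a)) (F (cube k b)) \<le> int (m + 1)"
        by (rule Fdist[OF k m lip t(1,2,5)])
      then have gd: "gdist_le V E (m + 1) (F (cube k a)) (F (cube k b))"
        unfolding V_def E_def by (rule linf_gdist[OF FV[OF t(1), unfolded V_def] FV[OF t(2), unfolded V_def]])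
      have s1: "f (F (cube k a)) = f (F (cube k b)) \<and> colour_comp V E f (F (cube k a)) \<noteq> colour_comp V E f (F (cube k b))
          \<longrightarrow> \<not> gdist_le V E (m + 1) (F (cube k a)) (F (cube k b))"
        using sep[THEN bspec, OF FV[OF t(1)], THEN bspec, OF FV[OF t(2)]] .
      have ceq: "colour_comp V E f (F (cube k a)) = colour_comp V E f (F (cube k b))"
      proof (rule ccontr)
        assume "colour_comp V E f (F (cube k a)) \<noteq> colour_comp V E f (F (cube k b))"
        then have "\<not> gdist_le V E (m + 1) (F (cube k a)) (F (cube k b))" using s1 feq by simp
        then show False using gd by simp
      qed
      have "colour_comp V E f (F (cube k a)) = P" unfolding P_def
        by (rule cc_eq[OF step(3)[unfolded P_def] Esym])
      moreover have "F (cube k b) \<in> colour_comp V E f (F (cube k b))" by (rule cc_self[OF FV[OF t(2)]])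
      ultimately show ?case using ceq by simp
    qed
    define S where "S = cube k ` {a. (Tr k col i)\<^sup>*\<^sup>* a0 a}"
    have "P \<subseteq> Zsp (CARD('n) - 1)"
    proof
      fix x assume "x \<in> P"
      then show "x \<in> Zsp (CARD('n) - 1)" using cc_mem[of x V E f "F (cube k a0)"] unfolding P_def V_def d_def by simp
    qed
    moreover have "one_connected (CARD('n) - 1) P" unfolding P_def E_def d_def by (rule one_connected_cc)
    moreover have "finite P" "real (card P) \<le> K" using fin FV[OF hx(1)] unfolding P_def by auto
    moreover have "S \<subseteq> cubes k"
    proof
      fix Q assume "Q \<in> S"
      then obtain a where a: "(Tr k col i)\<^sup>*\<^sup>* a0 a" "Q = cube k a" unfolding S_def by blast
      have "a \<in> idx k" using Tr_reach_props[OF a(1) hx(1,2)] by blast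
      then show "Q \<in> cubes k" unfolding cubes_eq a(2) by blast
    qed
    moreover have "\<forall>K\<in>S. F K \<in> P" unfolding S_def using inP by blast
    moreover have "connects_faces (\<Union>S)"
    proof -
      have "connected (\<Union>S)" unfolding S_def by (rule reach_connected[OF k])
      moreover obtain z0 where "z0 \<in> cube k a0" "z0 $ i = 0" using face_pts(1)[of k a0 i, OF k hx(3)] by blast
      then have "\<exists>z\<in>\<Union>S. z $ i = 0" unfolding S_def by blast
      moreover obtain z1 where "z1 \<in> cube k a1" "z1 $ i = 1" using face_pts(2)[of k a1 i, OF k hx(4)] by blast
      then have "\<exists>z\<in>\<Union>S. z $ i = 1" unfolding S_def using hx(5) by blast
      ultimately show ?thesis unfolding connects_faces_def by blast
    qed
    ultimately show "\<exists>P. P \<subseteq> Zsp (CARD('n) - 1) \<and> one_connected (CARD('n) - 1) P \<and>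
               finite P \<and> real (card P) \<le> K \<and>
               (\<exists>S. S \<subseteq> cubes k \<and> (\<forall>K\<in>S. F K \<in> P) \<and> connects_faces (\<Union>S))" by blast
  qed
qed


lemma chi_lower:
  fixes f :: "(nat \<Rightarrow> int) \<Rightarrow> nat" and K :: real
  assumes cc: "clustered_col (Zsp (CARD('n::finite) - 1)) (Ginf_adj (CARD('n) - 1)) r N K f"
    and N: "N < CARD('n)"
  shows False
proof -
  define d where "d = CARD('n) - 1"
  define V where "V = Zsp d"
  define E where "E = Ginf_adj d"
  have frange: "\<forall>x\<in>V. f x \<in> {1..N}"
    and fin: "\<forall>x\<in>V. finite (colour_comp V E f x) \<and> real (card (colour_comp V E f x)) \<le> K"
    using cc unfolding clustered_col_def V_def E_def d_def by blast+
  have Nd: "N \<le> d" using N unfolding d_def by linarith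
  define j0 :: 'n where "j0 = undefined"
  have cM: "card (UNIV - {j0}) = d" unfolding d_def by (simp add: card_Diff_singleton)
  obtain \<sigma> :: "nat \<Rightarrow> 'n" where \<sigma>: "bij_betw \<sigma> {0..<d} (UNIV - {j0})"
    using ex_bij_betw_nat_finite[of "UNIV - {j0}"] cM by auto
  have \<sigma>inj: "inj_on \<sigma> {0..<d}" using \<sigma> by (simp add: bij_betw_def)
  have \<sigma>img: "\<sigma> ` {0..<d} = UNIV - {j0}" using \<sigma> by (simp add: bij_betw_def)
  define k where "k = nat \<lceil>K\<rceil> + 1"
  have k: "k \<ge> 1" by (simp add: k_def)
  have Kk: "K < real k"
  proof -
    have "K \<le> real_of_int \<lceil>K\<rceil>" by simp
    also have "\<dots> \<le> real (nat \<lceil>K\<rceil>)" by simp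
    finally show ?thesis unfolding k_def by simp
  qed
  define \<pi> where "\<pi> a = (\<lambda>t. if t < d then int (a (\<sigma> t)) else 0)" for a :: "'n \<Rightarrow> nat"
  have \<pi>V: "\<pi> a \<in> V" for a by (simp add: \<pi>_def V_def Zsp_def)
  define col where "col a = \<sigma> (f (\<pi> a) - 1)" for a
  obtain i a0 a1 where hx: "a0 \<in> idx k" "col a0 = i" "a0 i = 1" "a1 i = k" "(Tr k col i)\<^sup>*\<^sup>* a0 a1"
    using hex[OF k, of col] by blast
  have fr: "f (\<pi> a) - 1 \<in> {0..<d}" "f (\<pi> a) \<ge> 1" for a
    using frange \<pi>V[of a] Nd by force+
  obtain t0 where t0: "t0 < d" "\<sigma> t0 = i"
    using hx(2) fr(1)[of a0] unfolding col_def by auto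
  define C where "C = colour_comp V E f (\<pi> a0)"
  have inC: "\<pi> a \<in> C" if "(Tr k col i)\<^sup>*\<^sup>* a0 a" for a
    using that
  proof (induction rule: rtranclp_induct)
    case base
    show ?case unfolding C_def by (rule cc_self[OF \<pi>V])
  next
    case (step a b)
    have t: "col a = i" "col b = i" "\<forall>s. a s \<le> b s + 1 \<and> b s \<le> a s + 1"
      using step(2) unfolding Tr_def by auto
    have "f (\<pi> a) - 1 = f (\<pi> b) - 1"
      using \<sigma>inj fr(1)[of a] fr(1)[of b] t(1,2) unfolding col_def inj_on_def by metis
    then have feq: "f (\<pi> b) = f (\<pi> a)" using fr(2)[of a] fr(2)[of b] by linarith
    have cl: "linf d (\<pi> a) (\<pi> b) \<le> 1"
    proof -
      have "\<bar>\<pi> a t - \<pi> b t\<bar> \<le> 1" if "t < d" for t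
        using t(3)[rule_format, of "\<sigma> t"] that by (auto simp: \<pi>_def)
      then show ?thesis by (simp add: linf_le_iff)
    qed
    show ?case
    proof (cases "linf d (\<pi> a) (\<pi> b) = 0")
      case True
      then have "\<pi> a = \<pi> b" using linf_zero_eq \<pi>V unfolding V_def by blast
      then show ?thesis using step(3) by simp
    next
      case False
      then have "Ginf_adj d (\<pi> a) (\<pi> b)" using cl linf_nonneg[of d "\<pi> a" "\<pi> b"] unfolding Ginf_adj_def by linarith
      then have "walk_len {v\<in>V. f v = f (\<pi> a)} E 1 (\<pi> a) (\<pi> b)"
        using \<pi>V feq unfolding E_def by (intro walk_len_step) auto
      then have pb: "\<pi> b \<in> colour_comp V E f (\<pi> a)" unfolding colour_comp_def by blast
      show ?thesis unfolding C_def by (rule cc_trans[OF step(3)[unfolded C_def] pb])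
    qed
  qed
  have ivt: "\<forall>v. 1 \<le> v \<and> v \<le> a i \<longrightarrow> (\<exists>b. (Tr k col i)\<^sup>*\<^sup>* a0 b \<and> b i = v)"
    if "(Tr k col i)\<^sup>*\<^sup>* a0 a" for a
    using that
  proof (induction rule: rtranclp_induct)
    case base
    show ?case using hx(3) by (metis le_antisym rtranclp.rtrancl_refl)
  next
    case (step a b)
    have bi: "b i \<le> a i + 1" using step(2) unfolding Tr_def by auto
    show ?case
    proof (intro allI impI)
      fix v assume v: "1 \<le> v \<and> v \<le> b i"
      show "\<exists>b. (Tr k col i)\<^sup>*\<^sup>* a0 b \<and> b i = v"
      proof (cases "v \<le> a i")
        case True then show ?thesis using step(3) v by blast
      next
        case False
        then have "v = b i" using v bi by linarith
        moreover have "(Tr k col i)\<^sup>*\<^sup>* a0 b" using step(1,2) by (metis rtranclp.rtrancl_into_rtrancl)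
        ultimately show ?thesis by blast
      qed
    qed
  qed
  have sub: "int ` {1..k} \<subseteq> (\<lambda>p. p t0) ` C"
  proof
    fix y assume "y \<in> int ` {1..k}"
    then obtain v where v: "v \<in> {1..k}" "y = int v" by blast
    obtain b where b: "(Tr k col i)\<^sup>*\<^sup>* a0 b" "b i = v" using ivt[OF hx(5)] v(1) hx(4) by auto
    have "\<pi> b t0 = y" using t0 b(2) v(2) by (simp add: \<pi>_def)
    then show "y \<in> (\<lambda>p. p t0) ` C" using inC[OF b(1)] by force
  qed
  have finC: "finite C" and cardC: "real (card C) \<le> K" using fin \<pi>V[of a0] unfolding C_def by auto
  have "k = card (int ` {1..k})" by (simp add: card_image)
  also have "\<dots> \<le> card ((\<lambda>p. p t0) ` C)" using sub finC by (intro card_mono) auto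
  also have "\<dots> \<le> card C" using finC by (rule card_image_le)
  finally have "real k \<le> real (card C)" by simp
  then show False using cardC Kk by linarith
qed

theorem corollary4p1:
  fixes m :: nat
  assumes "m \<le> CARD('n::finite) - 1"
  shows "(\<exists>C. Chat_ok TYPE('n) m C) \<and>
         (\<exists>K. Khat_ok (Zsp (CARD('n) - 1)) (Ginf_adj (CARD('n) - 1)) (m + 1) K) \<and>
         Chat TYPE('n) m \<le> Khat (Zsp (CARD('n) - 1)) (Ginf_adj (CARD('n) - 1)) (m + 1) \<and>
         Khat (Zsp (CARD('n) - 1)) (Ginf_adj (CARD('n) - 1)) (m + 1)
           \<le> fact (CARD('n) - 1) * (real m + 1) ^ (CARD('n) - 1)"
proof -
  define d where "d = CARD('n) - 1"
  define V where "V = Zsp d"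
  define E where "E = Ginf_adj d"
  have nd: "Suc d = CARD('n)" unfolding d_def by simp
  define K0 where "K0 = real (fact d * (m + 1) ^ d)"
  have cl0: "clustered_col V E (m + 1) CARD('n) K0 (bcol d (int (m + 1)))"
    using brick_clustered[of "m + 1" d] unfolding V_def E_def K0_def nd by simp
  have chi: "chi_star V E (m + 1) = CARD('n)"
    unfolding chi_star_def
  proof (rule Least_equality)
    show "\<exists>K f. clustered_col V E (m + 1) CARD('n) K f" using cl0 by blast
    show "CARD('n) \<le> y" if h: "\<exists>K f. clustered_col V E (m + 1) y K f" for y
    proof (rule ccontr)
      assume "\<not> CARD('n) \<le> y"
      then have "y < CARD('n)" by simp
      moreover obtain K f where "clustered_col V E (m + 1) y K f" using h by blast
      ultimately show False using chi_lower unfolding V_def E_def d_def by blast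
    qed
  qed
  have kok0: "Khat_ok V E (m + 1) K0" unfolding Khat_ok_def chi using cl0 by blast
  have c_of_k: "Chat_ok TYPE('n) m K" if h: "Khat_ok V E (m + 1) K" for K
  proof -
    obtain f where "clustered_col V E (m + 1) CARD('n) K f" using h unfolding Khat_ok_def chi by blast
    then show ?thesis using chat_from_col[OF assms] unfolding V_def E_def d_def by blast
  qed
  have kpos: "K > 0" if "Khat_ok V E (m + 1) K" for K
    using that unfolding Khat_ok_def clustered_col_def by blast
  have cpos: "C > 0" if "Chat_ok TYPE('n) m C" for C
    using that unfolding Chat_ok_def by blast
  have bddK: "bdd_below {K. Khat_ok V E (m + 1) K}"
  proof (rule bdd_belowI[of _ 0])
    fix x assume "x \<in> {K. Khat_ok V E (m + 1) K}"
    then have "Khat_ok V E (m + 1) x" by (simp only: mem_Collect_eq)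
    from kpos[OF this] show "0 \<le> x" by simp
  qed
  have bddC: "bdd_below {C. Chat_ok TYPE('n) m C}"
    by (rule bdd_belowI[of _ 0]) (auto dest: cpos)
  have 1: "\<exists>C. Chat_ok TYPE('n) m C" using c_of_k[OF kok0] by blast
  have 2: "\<exists>K. Khat_ok V E (m + 1) K" using kok0 by blast
  have 3: "Chat TYPE('n) m \<le> Khat V E (m + 1)"
    unfolding Chat_def Khat_def
    by (rule cInf_superset_mono) (use kok0 bddC c_of_k in auto)
  have "Khat V E (m + 1) \<le> K0"
    unfolding Khat_def by (rule cInf_lower) (use kok0 bddK in auto)
  moreover have "K0 = fact d * (real m + 1) ^ d" unfolding K0_def by (simp add: add.commute)
  ultimately have 4: "Khat V E (m + 1) \<le> fact d * (real m + 1) ^ d" by simp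
  show ?thesis using 1 2 3 4 unfolding V_def E_def d_def by blast
qed


end
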